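(* Let $F(s)$ be an entire function of genus zero or one. Suppose that (i) $F(s)$ is real on the real axis; (ii) there exists a real number $\sigma_0<1/2$ such that all zeros of $F(s)$ lie in the vertical strip $\sigma_0<\mathrm{Re}(s)<1/2$ except for finitely many zeros; (iii) $F(s)$ has only finitely many zeros in the half-plane $\mathrm{Re}(s)\geq 1/2$; (iv) there exists $C>0$ such that $N(T)\leq C\,T\log T$ as $T\to\infty$, where $N(T)$ is the number of zeros $\rho$ of $F$ with $0\leq \mathrm{Im}(\rho)<T$; (v) $F(1-\sigma)/F(\sigma)>0$ for all sufficiently large real $\sigma>0$, and $F(1-\sigma)/F(\sigma)\to 0$ as $\sigma\to\infty$. Then there exist a constant $C$, an integer $m\geq 0$ and a real number $B'\geq 0$ such that \[ F(s)= C s^m e^{B' s}\prod_{0 \neq \rho \in \mathbb R}\Bigl(1-\frac{s}{\rho}\Bigr)\prod_{\mathrm{Im}(\rho)>0}\left[ \Bigl(1-\frac{s}{\rho}\Bigr)\Bigl(1-\frac{s}{\bar{\rho}}\Bigr) \right], \] where $\rho$ runs over the zeros of $F$ counted with multiplicity, and the product on the right converges absolutely on every compact set when taken with the brackets.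
   Context: An entire function of genus at most one admits a Hadamard factorization $e^{a+bs}s^m\prod_\rho(1-s/\rho)e^{s/\rho}$ with $\sum_\rho|\rho|^{-2}<\infty$. *)

theory Defs
  imports "HOL-Complex_Analysis.Complex_Analysis"
begin

definition zero_mult :: "(complex \<Rightarrow> complex) \<Rightarrow> complex \<Rightarrow> nat" where
  "zero_mult F z = (if F z = 0 then nat (zorder F z) else 0)"

text \<open>Zeros of F counted with multiplicity: a zero z of multiplicity m
  is represented by the m index pairs (z,0), ..., (z,m-1).\<close>
definition zeros_mult :: "(complex \<Rightarrow> complex) \<Rightarrow> (complex \<times> nat) set" where
  "zeros_mult F = {(z, k). F z = 0 \<and> k < zero_mult F z}"

definition genus_le_one :: "(complex \<Rightarrow> complex) \<Rightarrow> bool" where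
  "genus_le_one F \<longleftrightarrow> F holomorphic_on UNIV \<and>
     (\<exists>a b :: complex. \<exists>m :: nat.
        (\<lambda>p. 1 / norm (fst p) ^ 2) summable_on {p \<in> zeros_mult F. fst p \<noteq> 0} \<and>
        (\<forall>s. ((\<lambda>X. exp (a + b * s) * s ^ m *
                   (\<Prod>p\<in>X. (1 - s / fst p) * exp (s / fst p)))
               \<longlongrightarrow> F s) (finite_subsets_at_top {p \<in> zeros_mult F. fst p \<noteq> 0})))"

definition zero_count :: "(complex \<Rightarrow> complex) \<Rightarrow> real \<Rightarrow> nat" where
  "zero_count F T = card {p \<in> zeros_mult F. 0 \<le> Im (fst p) \<and> Im (fst p) < T}"

definition brfactor :: "complex \<Rightarrow> complex \<Rightarrow> complex" where
  "brfactor \<rho> s = (if \<rho> \<in> \<real> then 1 - s / \<rho> else (1 - s / \<rho>) * (1 - s / cnj \<rho>))"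

definition prod_index :: "(complex \<Rightarrow> complex) \<Rightarrow> (complex \<times> nat) set" where
  "prod_index F = {p \<in> zeros_mult F. (fst p \<in> \<real> \<and> fst p \<noteq> 0) \<or> Im (fst p) > 0}"

end

theory Submission
  imports Defs
begin

lemma refl_F:
  fixes F :: "complex \<Rightarrow> complex"
  assumes hol: "F holomorphic_on UNIV" and re: "\<forall>x::real. F (of_real x) \<in> \<real>"
  shows "F (cnj z) = cnj (F z)"
proof -
  define H where "H = (\<lambda>z. F z - (cnj \<circ> F \<circ> cnj) z)"
  have "(cnj \<circ> F \<circ> cnj) holomorphic_on UNIV"
    by (rule holomorphic_on_compose_cnj_cnj) (use hol in auto)
  hence hH: "H holomorphic_on UNIV" unfolding H_def using hol by (intro holomorphic_intros)
  have lim: "0 islimpt (\<real>::complex set)"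
  proof (rule islimpt_approachable[THEN iffD2], intro allI impI)
    fix e :: real assume "e > 0"
    have "complex_of_real (e/2) \<in> \<real> \<and> complex_of_real (e/2) \<noteq> 0 \<and> dist (complex_of_real (e/2)) 0 < e"
      using \<open>e > 0\<close> by (auto simp: dist_norm)
    thus "\<exists>x'::complex\<in>\<real>. x' \<noteq> 0 \<and> dist x' 0 < e" by blast
  qed
  have "H (cnj z) = 0"
  proof (rule analytic_continuation[OF hH open_UNIV connected_UNIV subset_UNIV _ lim])
    fix x :: complex assume "x \<in> \<real>"
    then obtain r where r: "x = of_real r" by (auto elim: Reals_cases)
    have "F x \<in> \<real>" using re r by auto
    thus "H x = 0" unfolding H_def using r by (auto simp: Reals_cnj_iff)
  qed auto
  thus ?thesis unfolding H_def by simp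
qed

lemma zorder_cnj:
  fixes F :: "complex \<Rightarrow> complex"
  assumes hol: "F holomorphic_on UNIV" and refl: "\<And>z. F (cnj z) = cnj (F z)"
    and nz: "F \<beta> \<noteq> 0"
  shows "zorder F (cnj \<rho>) = zorder F \<rho>"
proof -
  have iso: "isolated_singularity_at F \<rho>"
    by (rule isolated_singularity_at_holomorphic[of F UNIV]) (use hol holomorphic_on_subset in auto)
  have ness: "not_essential F \<rho>"
    by (rule not_essential_holomorphic[OF hol]) auto
  have "\<forall>\<^sub>F w in at \<rho>. F w \<noteq> 0 \<and> w \<in> UNIV"
    by (rule non_zero_neighbour_alt[OF hol open_UNIV connected_UNIV _ _ nz]) auto
  hence fr: "\<exists>\<^sub>F w in at \<rho>. F w \<noteq> 0"
    by (intro eventually_frequently) (auto elim: eventually_mono)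
  obtain r where r: "r > 0" "zor_poly F \<rho> holomorphic_on cball \<rho> r" "zor_poly F \<rho> \<rho> \<noteq> 0"
    "\<And>w. w \<in> cball \<rho> r - {\<rho>} \<Longrightarrow> F w = zor_poly F \<rho> w * (w - \<rho>) powi zorder F \<rho>"
    using zorder_exist[OF iso ness fr] by blast
  define g where "g = zor_poly F \<rho>"
  have nc: "\<And>a b. cmod (a - cnj b) = cmod (cnj a - b)"
    by (metis complex_cnj_cnj complex_cnj_diff complex_mod_cnj)
  have "(cnj \<circ> g \<circ> cnj) holomorphic_on ball (cnj \<rho>) r"
  proof (rule holomorphic_on_compose_cnj_cnj)
    have "cnj ` ball (cnj \<rho>) r \<subseteq> cball \<rho> r"
      by (auto simp: dist_norm nc)
    thus "g holomorphic_on cnj ` ball (cnj \<rho>) r" using r(2) unfolding g_def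
      using holomorphic_on_subset by blast
  qed auto
  show ?thesis
  proof (rule zorder_eqI[OF open_ball _ \<open>(cnj \<circ> g \<circ> cnj) holomorphic_on ball (cnj \<rho>) r\<close>])
    show "cnj \<rho> \<in> ball (cnj \<rho>) r" using r by auto
    show "(cnj \<circ> g \<circ> cnj) (cnj \<rho>) \<noteq> 0" using r(3) by (simp add: g_def)
    fix w assume w: "w \<in> ball (cnj \<rho>) r" "w \<noteq> cnj \<rho>"
    have "cnj w \<in> cball \<rho> r - {\<rho>}" using w
      by (auto simp: dist_norm nc)
    hence "F (cnj w) = g (cnj w) * (cnj w - \<rho>) powi zorder F \<rho>" using r(4) by (simp add: g_def)
    hence "cnj (F (cnj w)) = cnj (g (cnj w)) * (w - cnj \<rho>) powi zorder F \<rho>" by simp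
    thus "F w = (cnj \<circ> g \<circ> cnj) w * (w - cnj \<rho>) powi zorder F \<rho>"
      using refl[of "cnj w"] by simp
  qed
qed

lemma norm_prod_minus1_le_gen:
  fixes f :: "'a \<Rightarrow> complex"
  shows "norm (prod (\<lambda>n. 1 + f n) A - 1) \<le> prod (\<lambda>n. 1 + norm (f n)) A - 1"
proof (induction A rule: infinite_finite_induct)
  case (insert x A)
  from insert.hyps have
    "norm ((\<Prod>n\<in>insert x A. 1 + f n) - 1) =
       norm ((\<Prod>n\<in>A. 1 + f n) - 1 + f x * (\<Prod>n\<in>A. 1 + f n))"
    by (simp add: algebra_simps)
  also have "\<dots> \<le> norm ((\<Prod>n\<in>A. 1 + f n) - 1) + norm (f x * (\<Prod>n\<in>A. 1 + f n))"
    by (rule norm_triangle_ineq)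
  also have "norm (f x * (\<Prod>n\<in>A. 1 + f n)) = norm (f x) * (\<Prod>x\<in>A. norm (1 + f x))"
    by (simp add: prod_norm norm_mult)
  also have "(\<Prod>x\<in>A. norm (1 + f x)) \<le> (\<Prod>x\<in>A. norm (1::complex) + norm (f x))"
    by (intro prod_mono norm_triangle_ineq ballI conjI) auto
  also have "norm (1::complex) = 1" by simp
  also note insert.IH
  also have "(\<Prod>n\<in>A. 1 + norm (f n)) - 1 + norm (f x) * (\<Prod>x\<in>A. 1 + norm (f x)) =
             (\<Prod>n\<in>insert x A. 1 + norm (f n)) - 1"
    using insert.hyps by (simp add: algebra_simps)
  finally show ?case by (simp add: mult_left_mono)
qed simp_all

lemma prod_diff_bound:
  fixes g :: "'a \<Rightarrow> complex"
  assumes fin: "finite Y" and XY: "X \<subseteq> Y" and bd: "\<And>p. p \<in> Y \<Longrightarrow> norm (g p - 1) \<le> M p"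
  shows "norm (prod g Y - prod g X) \<le> exp (sum M Y) - exp (sum M X)"
proof -
  have M0: "\<And>p. p \<in> Y \<Longrightarrow> M p \<ge> 0" using bd norm_ge_zero order_trans by blast
  have finX: "finite X" using fin XY finite_subset by blast
  have split: "prod g Y = prod g (Y - X) * prod g X" using prod.subset_diff[OF XY fin] .
  have sumsplit: "sum M Y = sum M (Y - X) + sum M X" using sum.subset_diff[OF XY fin] .
  have n1: "norm (prod g X) \<le> exp (sum M X)"
  proof -
    have "norm (prod g X) = (\<Prod>p\<in>X. norm (g p))" by (simp add: prod_norm)
    also have "\<dots> \<le> (\<Prod>p\<in>X. 1 + M p)"
    proof (rule prod_mono)
      fix p assume "p \<in> X"
      hence "norm (g p - 1) \<le> M p" using bd XY by auto
      moreover have "norm (g p) \<le> norm (g p - 1) + 1" using norm_triangle_ineq[of "g p - 1" 1] by simp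
      ultimately show "0 \<le> norm (g p) \<and> norm (g p) \<le> 1 + M p" by auto
    qed
    also have "\<dots> \<le> exp (sum M X)" by (rule prod_le_exp_sum) (use M0 XY in auto)
    finally show ?thesis .
  qed
  have n2: "norm (prod g (Y - X) - 1) \<le> exp (sum M (Y - X)) - 1"
  proof -
    have "prod g (Y - X) = (\<Prod>p\<in>Y - X. 1 + (g p - 1))" by simp
    hence "norm (prod g (Y - X) - 1) \<le> (\<Prod>p\<in>Y - X. 1 + norm (g p - 1)) - 1"
      using norm_prod_minus1_le_gen[of "\<lambda>p. g p - 1" "Y - X"] by simp
    also have "(\<Prod>p\<in>Y - X. 1 + norm (g p - 1)) \<le> (\<Prod>p\<in>Y - X. 1 + M p)"
      by (intro prod_mono) (use bd in auto)
    also have "\<dots> \<le> exp (sum M (Y - X))" by (rule prod_le_exp_sum) (use M0 in auto)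
    finally show ?thesis by simp
  qed
  have "norm (prod g Y - prod g X) = norm (prod g X) * norm (prod g (Y - X) - 1)"
    by (simp add: split algebra_simps norm_mult[symmetric])
  also have "\<dots> \<le> exp (sum M X) * (exp (sum M (Y - X)) - 1)"
    by (intro mult_mono n1 n2) auto
  also have "\<dots> = exp (sum M Y) - exp (sum M X)"
    by (simp add: sumsplit exp_add algebra_simps)
  finally show ?thesis .
qed

lemma unif_prod:
  fixes g :: "'a \<Rightarrow> complex \<Rightarrow> complex" and M :: "'a \<Rightarrow> real"
  assumes sM: "M summable_on I" and bd: "\<And>p s. p \<in> I \<Longrightarrow> s \<in> K \<Longrightarrow> norm (g p s - 1) \<le> M p"
    and pw: "\<And>s. s \<in> K \<Longrightarrow> ((\<lambda>X. \<Prod>p\<in>X. g p s) \<longlongrightarrow> P s) (finite_subsets_at_top I)"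
  shows "uniform_limit K (\<lambda>X s. \<Prod>p\<in>X. g p s) P (finite_subsets_at_top I)"
  unfolding uniform_limit_iff
proof (intro allI impI)
  fix e :: real assume e: "e > 0"
  define S where "S = infsum M I"
  have "(sum M \<longlongrightarrow> S) (finite_subsets_at_top I)"
    using has_sum_infsum[OF sM] unfolding S_def has_sum_def .
  hence lim: "((\<lambda>X. exp (sum M X)) \<longlongrightarrow> exp S) (finite_subsets_at_top I)" by (rule tendsto_exp)
  have e4: "e/4 > 0" using e by simp
  from tendstoD[OF lim e4]
  have "eventually (\<lambda>X. dist (exp (sum M X)) (exp S) < e/4) (finite_subsets_at_top I)" .
  then obtain X0 where X0a: "finite X0" "X0 \<subseteq> I" and
    X0b: "\<forall>Y. finite Y \<and> X0 \<subseteq> Y \<and> Y \<subseteq> I \<longrightarrow> dist (exp (sum M Y)) (exp S) < e/4"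
    unfolding eventually_finite_subsets_at_top by (elim exE conjE) 
  have X0: "finite X0" "X0 \<subseteq> I"
    "\<And>Y. finite Y \<Longrightarrow> X0 \<subseteq> Y \<Longrightarrow> Y \<subseteq> I \<Longrightarrow> dist (exp (sum M Y)) (exp S) < e/4"
    using X0a X0b by auto
  show "eventually (\<lambda>X. \<forall>s\<in>K. dist (\<Prod>p\<in>X. g p s) (P s) < e) (finite_subsets_at_top I)"
    unfolding eventually_finite_subsets_at_top
  proof (intro exI[of _ X0] conjI allI impI ballI)
    fix X s assume XX: "finite X \<and> X0 \<subseteq> X \<and> X \<subseteq> I" and s: "s \<in> K"
    have ev: "eventually (\<lambda>Y. norm ((\<Prod>p\<in>Y. g p s) - (\<Prod>p\<in>X. g p s)) \<le> e/2) (finite_subsets_at_top I)"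
      unfolding eventually_finite_subsets_at_top
    proof (intro exI[of _ X] conjI allI impI)
      fix Y assume YY: "finite Y \<and> X \<subseteq> Y \<and> Y \<subseteq> I"
      have "norm ((\<Prod>p\<in>Y. g p s) - (\<Prod>p\<in>X. g p s)) \<le> exp (sum M Y) - exp (sum M X)"
        by (rule prod_diff_bound) (use YY bd s in auto)
      also have "\<dots> \<le> e/2"
      proof -
        have "dist (exp (sum M Y)) (exp S) < e/4" using X0(3)[of Y] XX YY by blast
        moreover have "dist (exp (sum M X)) (exp S) < e/4" using X0(3)[of X] XX by blast
        ultimately show ?thesis unfolding dist_real_def by linarith
      qed
      finally show "norm ((\<Prod>p\<in>Y. g p s) - (\<Prod>p\<in>X. g p s)) \<le> e/2" .
    qed (use XX in auto)
    have "((\<lambda>Y. norm ((\<Prod>p\<in>Y. g p s) - (\<Prod>p\<in>X. g p s))) \<longlongrightarrow> norm (P s - (\<Prod>p\<in>X. g p s)))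
          (finite_subsets_at_top I)"
      by (intro tendsto_intros pw s)
    hence "norm (P s - (\<Prod>p\<in>X. g p s)) \<le> e/2"
      using ev by (intro tendsto_upperbound) auto
    thus "dist (\<Prod>p\<in>X. g p s) (P s) < e" using e by (simp add: dist_norm norm_minus_commute)
  qed (use X0 in auto)
qed


lemma brf_zero [simp]: "brfactor \<rho> 0 = 1"
  by (simp add: brfactor_def)

lemma norm_cnj_diff_real: "norm (cnj \<rho> - of_real x) = norm (\<rho> - of_real x)"
  by (metis Reals_cnj_iff Reals_of_real complex_cnj_diff complex_mod_cnj)

lemma brf_real_arg:
  "brfactor \<rho> (of_real x) \<in> \<real>"
proof (cases "\<rho> \<in> \<real>")
  case True thus ?thesis by (auto simp: brfactor_def)
next
  case False
  have "(1 - of_real x / cnj \<rho>) = cnj (1 - of_real x / \<rho>)" by simp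
  hence "brfactor \<rho> (of_real x) = (1 - of_real x / \<rho>) * cnj (1 - of_real x / \<rho>)"
    using False by (simp add: brfactor_def)
  also have "\<dots> \<in> \<real>" by (subst complex_mult_cnj) (rule Reals_of_real)
  finally show ?thesis .
qed

lemma brf_norm_real:
  assumes "\<rho> \<noteq> 0"
  shows "norm (brfactor \<rho> (of_real x)) =
    (if \<rho> \<in> \<real> then norm (\<rho> - of_real x) / norm \<rho> else norm (\<rho> - of_real x) ^ 2 / norm \<rho> ^ 2)"
proof (cases "\<rho> \<in> \<real>")
  case True
  have "1 - of_real x / \<rho> = (\<rho> - of_real x) / \<rho>" using assms by (simp add: field_simps)
  thus ?thesis using True by (simp add: brfactor_def norm_divide)
next
  case False
  have c0: "cnj \<rho> \<noteq> 0" using assms by simp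
  have "(1 - of_real x / \<rho>) * (1 - of_real x / cnj \<rho>) = (\<rho> - of_real x) * (cnj \<rho> - of_real x) / (\<rho> * cnj \<rho>)"
    using assms c0 by (simp add: field_simps)
  hence "norm (brfactor \<rho> (of_real x)) = norm (\<rho> - of_real x) * norm (cnj \<rho> - of_real x) / (norm \<rho> * norm (cnj \<rho>))"
    using False by (simp add: brfactor_def norm_divide norm_mult)
  thus ?thesis using False by (simp add: norm_cnj_diff_real power2_eq_square)
qed

lemma brf_bound:
  assumes "\<rho> \<noteq> 0" "\<bar>Re \<rho>\<bar> \<le> K" "\<rho> \<in> \<real> \<Longrightarrow> norm \<rho> \<le> K"
  shows "norm (brfactor \<rho> s - 1) \<le> (2 * K * norm s + norm s ^ 2) / norm \<rho> ^ 2"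
proof (cases "\<rho> \<in> \<real>")
  case True
  have K0: "K \<ge> 0" using assms(2) by linarith
  have "norm (brfactor \<rho> s - 1) = norm s / norm \<rho>" using True by (simp add: brfactor_def norm_divide)
  also have "\<dots> = norm s * norm \<rho> / norm \<rho> ^ 2" using assms(1) by (simp add: power2_eq_square)
  also have "\<dots> \<le> (2 * K * norm s + norm s ^ 2) / norm \<rho> ^ 2"
  proof (rule divide_right_mono)
    have "norm s * norm \<rho> \<le> norm s * K" using assms(3)[OF True] by (simp add: mult_left_mono)
    also have "\<dots> \<le> 2 * K * norm s + norm s ^ 2" using K0 by (simp add: algebra_simps)
    finally show "norm s * norm \<rho> \<le> 2 * K * norm s + norm s ^ 2" .
  qed simp
  finally show ?thesis .
next
  case False
  have c0: "cnj \<rho> \<noteq> 0" using assms by simp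
  have rc: "\<rho> * cnj \<rho> = of_real (norm \<rho> ^ 2)" by (rule complex_norm_square[symmetric])
  have ac: "\<rho> + cnj \<rho> = of_real (2 * Re \<rho>)" by (rule complex_add_cnj)
  have "brfactor \<rho> s - 1 = (s^2 - s * (\<rho> + cnj \<rho>)) / (\<rho> * cnj \<rho>)"
    using False assms(1) c0 by (simp add: brfactor_def field_simps power2_eq_square)
  also have "\<dots> = (s^2 - s * of_real (2 * Re \<rho>)) / of_real (norm \<rho> ^ 2)" by (simp only: rc ac)
  finally have eq: "norm (brfactor \<rho> s - 1) = norm (s^2 - s * of_real (2 * Re \<rho>)) / norm \<rho> ^ 2"
    by (simp only: norm_divide norm_of_real abs_of_nonneg[OF zero_le_power2])
  have "norm (s^2 - s * of_real (2 * Re \<rho>)) \<le> norm (s^2) + norm (s * of_real (2 * Re \<rho>))"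
    by (rule norm_triangle_ineq4)
  also have "\<dots> = norm s ^ 2 + norm s * (2 * \<bar>Re \<rho>\<bar>)" by (simp add: norm_mult norm_power)
  also have "\<dots> \<le> norm s ^ 2 + norm s * (2 * K)" using assms(2) by (intro add_left_mono mult_left_mono) auto
  finally show ?thesis unfolding eq by (intro divide_right_mono) (auto simp: algebra_simps)
qed


lemma ratio_strip:
  assumes nz: "\<rho> \<noteq> 0" and hb: "Re \<rho> < 1/2" and K: "\<bar>Re \<rho>\<bar> \<le> K" and sg: "\<sigma> \<ge> K + 2"
  defines "u \<equiv> (2*\<sigma>-1)*(1-2*Re \<rho>)/((\<sigma>-1+Re \<rho>)^2 + (Im \<rho>)^2)"
  shows "norm (brfactor \<rho> (of_real \<sigma>)) \<le> (1 + u) * norm (brfactor \<rho> (of_real (1-\<sigma>)))"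
    and "0 \<le> u"
    and "u \<le> 2*\<sigma>*(1+2*K)*(K^2+1) / norm \<rho>^2"
    and "u \<le> 2*\<sigma>*(1+2*K)/(\<sigma>-1-K)^2"
proof -
  define \<beta> where "\<beta> = Re \<rho>"
  define \<gamma> where "\<gamma> = Im \<rho>"
  define d where "d = \<sigma> - 1 + \<beta>"
  define Bq where "Bq = d^2 + \<gamma>^2"
  define N where "N = (2*\<sigma>-1)*(1-2*\<beta>)"
  have K0: "K \<ge> 0" using K by linarith
  have d1: "d \<ge> 1" using K sg unfolding d_def \<beta>_def by linarith
  have dK: "d \<ge> \<sigma> - 1 - K" using K unfolding d_def \<beta>_def by linarith
  have Bq1: "Bq \<ge> 1"
  proof -
    have "d^2 \<ge> 1" using d1 by (metis one_le_power)
    thus ?thesis unfolding Bq_def by (smt (verit) zero_le_power2)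
  qed
  have N0: "N \<ge> 0" unfolding N_def using hb sg K0 \<beta>_def by (intro mult_nonneg_nonneg) auto
  have u_eq: "u = N / Bq" unfolding u_def N_def Bq_def d_def \<beta>_def \<gamma>_def by simp
  show u0: "0 \<le> u" unfolding u_eq using N0 Bq1 by simp
  have nA: "norm (\<rho> - of_real \<sigma>) ^ 2 = (\<sigma> - \<beta>)^2 + \<gamma>^2"
    unfolding cmod_power2 \<beta>_def \<gamma>_def by (simp add: power2_commute)
  have nB: "norm (\<rho> - of_real (1 - \<sigma>)) ^ 2 = Bq"
    unfolding cmod_power2 Bq_def d_def \<beta>_def \<gamma>_def by (simp add: algebra_simps)
  have AB: "(\<sigma> - \<beta>)^2 + \<gamma>^2 = (1 + u) * Bq"
    using Bq1 unfolding u_eq N_def Bq_def d_def by (simp add: field_simps power2_eq_square)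
  show "norm (brfactor \<rho> (of_real \<sigma>)) \<le> (1 + u) * norm (brfactor \<rho> (of_real (1-\<sigma>)))"
  proof (cases "\<rho> \<in> \<real>")
    case False
    have q1: "norm (brfactor \<rho> (of_real \<sigma>)) = norm (\<rho> - of_real \<sigma>)^2 / norm \<rho>^2"
      using brf_norm_real[OF nz, of \<sigma>] False by (simp only: False if_False)
    have q2: "norm (brfactor \<rho> (of_real (1-\<sigma>))) = norm (\<rho> - of_real (1-\<sigma>))^2 / norm \<rho>^2"
      using brf_norm_real[OF nz, of "1-\<sigma>"] False by (simp only: False if_False)
    show ?thesis unfolding q1 q2 nA nB AB by simp
  next
    case True
    hence g0: "\<gamma> = 0" unfolding \<gamma>_def by (simp add: complex_is_Real_iff)
    have "norm (\<rho> - of_real \<sigma>) = sqrt ((\<sigma> - \<beta>)^2 + \<gamma>^2)" using nA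
      by (metis norm_ge_zero real_sqrt_abs real_sqrt_unique abs_of_nonneg)
    also have "\<dots> = \<sigma> - \<beta>" using g0 K sg \<beta>_def by simp
    finally have e1: "norm (\<rho> - of_real \<sigma>) = \<sigma> - \<beta>" .
    have "norm (\<rho> - of_real (1 - \<sigma>)) = sqrt Bq" using nB
      by (metis norm_ge_zero real_sqrt_abs real_sqrt_unique abs_of_nonneg)
    also have "\<dots> = d" using g0 d1 Bq_def by simp
    finally have e2: "norm (\<rho> - of_real (1 - \<sigma>)) = d" .
    have "\<sigma> - \<beta> \<le> (1 + u) * d"
    proof -
      have ub: "u = N / d^2" using u_eq g0 Bq_def by simp
      have h1: "d \<le> 2*\<sigma>-1" unfolding d_def using \<beta>_def K sg by linarith
      have h2: "1 - 2*\<beta> \<ge> 0" using hb \<beta>_def by linarith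
      have "(1 - 2*\<beta>) * d \<le> N" unfolding N_def using mult_left_mono[OF h1 h2] by (simp add: mult.commute)
      hence "(1 - 2*\<beta>) \<le> N / d" using d1 by (simp add: field_simps)
      also have "N / d = u * d" using d1 ub by (simp add: field_simps power2_eq_square)
      finally show ?thesis unfolding d_def by (simp add: algebra_simps)
    qed
    hence "(\<sigma> - \<beta>) / norm \<rho> \<le> (1 + u) * d / norm \<rho>" by (intro divide_right_mono) auto
    have q1: "norm (brfactor \<rho> (of_real \<sigma>)) = norm (\<rho> - of_real \<sigma>) / norm \<rho>"
      using brf_norm_real[OF nz, of \<sigma>] True by (simp only: True if_True)
    have q2: "norm (brfactor \<rho> (of_real (1-\<sigma>))) = norm (\<rho> - of_real (1-\<sigma>)) / norm \<rho>"
      using brf_norm_real[OF nz, of "1-\<sigma>"] True by (simp only: True if_True)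
    show ?thesis unfolding q1 q2 e1 e2 using \<open>(\<sigma> - \<beta>) / norm \<rho> \<le> (1 + u) * d / norm \<rho>\<close> by simp
  qed
  have Nb: "N \<le> 2*\<sigma>*(1+2*K)"
    unfolding N_def using hb K sg K0 \<beta>_def by (intro mult_mono) auto
  show "u \<le> 2*\<sigma>*(1+2*K)*(K^2+1) / norm \<rho>^2"
  proof -
    have n2: "norm \<rho> ^ 2 = \<beta>^2 + \<gamma>^2" unfolding cmod_power2 \<beta>_def \<gamma>_def ..
    have "\<beta>^2 \<le> K^2" using K \<beta>_def by (metis abs_le_square_iff abs_of_nonneg K0)
    have d2: "d^2 \<ge> 1" using d1 by (metis one_le_power)
    have Bg: "1 + \<gamma>^2 \<le> Bq" unfolding Bq_def using d2 by linarith
    have "norm \<rho> ^ 2 \<le> K^2 + \<gamma>^2" unfolding n2 using \<open>\<beta>^2 \<le> K^2\<close> by linarith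
    also have "\<dots> \<le> (K^2+1)*(1+\<gamma>^2)"
    proof -
      have "(K^2+1)*(1+\<gamma>^2) = K^2 + \<gamma>^2 + 1 + K^2*\<gamma>^2" by (simp add: algebra_simps)
      moreover have "K^2*\<gamma>^2 \<ge> 0" by simp
      ultimately show ?thesis by linarith
    qed
    also have "\<dots> \<le> (K^2+1)*Bq" using Bg by (intro mult_left_mono) auto
    finally have nb: "norm \<rho> ^ 2 \<le> (K^2 + 1) * Bq" .
    have pos: "norm \<rho> ^ 2 > 0" using nz by simp
    have "u = N / Bq" by (rule u_eq)
    also have "\<dots> = N * (K^2+1) / ((K^2+1) * Bq)"
    proof -
      have "K^2 + 1 \<noteq> (0::real)" by (smt (verit) zero_le_power2)
      thus ?thesis by simp
    qed
    also have "\<dots> \<le> N * (K^2+1) / norm \<rho>^2"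
    proof (rule divide_left_mono[OF nb])
      show "0 \<le> N * (K^2+1)" using N0 by simp
      have "(K^2+1) * Bq > 0" using Bq1 by (smt (verit) zero_le_power2 mult_pos_pos)
      thus "0 < (K^2+1) * Bq * norm \<rho>^2" using pos by simp
    qed
    also have "\<dots> \<le> 2*\<sigma>*(1+2*K)*(K^2+1) / norm \<rho>^2"
      using Nb pos by (intro divide_right_mono mult_right_mono) auto
    finally show ?thesis .
  qed
  show "u \<le> 2*\<sigma>*(1+2*K)/(\<sigma>-1-K)^2"
  proof -
    have s1: "\<sigma> - 1 - K \<ge> 1" using sg by simp
    have "(\<sigma>-1-K)^2 \<le> d^2" using dK s1 by (intro power_mono) auto
    also have "\<dots> \<le> Bq" unfolding Bq_def by simp
    finally have "(\<sigma>-1-K)^2 \<le> Bq" .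
    moreover have "(\<sigma>-1-K)^2 > 0" using s1 by simp
    ultimately have "N / Bq \<le> N / (\<sigma>-1-K)^2" using N0 Bq1 by (intro divide_left_mono) auto
    also have "\<dots> \<le> 2*\<sigma>*(1+2*K)/(\<sigma>-1-K)^2" using Nb by (intro divide_right_mono) auto
    finally show ?thesis using u_eq by simp
  qed
qed


lemma ratio_exc:
  assumes nz: "\<rho> \<noteq> 0" and L: "norm \<rho> \<le> L" and sg: "\<sigma> \<ge> 4*(L+1)"
  shows "norm (brfactor \<rho> (of_real \<sigma>)) \<le> 3 * norm (brfactor \<rho> (of_real (1-\<sigma>)))"
proof -
  define a where "a = norm (\<rho> - of_real \<sigma>)"
  define b where "b = norm (\<rho> - of_real (1-\<sigma>))"
  have L0: "L \<ge> 0" using L norm_ge_zero order_trans by blast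
  have "a \<le> norm \<rho> + norm (of_real \<sigma> :: complex)" unfolding a_def by (rule norm_triangle_ineq4)
  hence a1: "4 * a \<le> 5 * \<sigma>" using L sg L0 by simp
  have "norm (of_real (1-\<sigma>) :: complex) - norm \<rho> \<le> b" unfolding b_def
    using norm_triangle_ineq2[of "of_real (1-\<sigma>)" \<rho>] by (simp add: norm_minus_commute)
  moreover have "norm (of_real (1-\<sigma>) :: complex) = \<sigma> - 1" using sg L0 by (simp only: norm_of_real) simp
  moreover have "4*L + 4 \<le> \<sigma>" using sg by simp
  ultimately have b1: "4 * b \<ge> 3 * \<sigma>" using L L0 by linarith
  have a0: "a \<ge> 0" unfolding a_def by simp
  have ab: "a \<le> (5/3) * b" using a1 b1 by simp
  show ?thesis
  proof (cases "\<rho> \<in> \<real>")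
    case True
    have q1: "norm (brfactor \<rho> (of_real \<sigma>)) = a / norm \<rho>"
      using brf_norm_real[OF nz, of \<sigma>] True by (simp only: True if_True a_def)
    have q2: "norm (brfactor \<rho> (of_real (1-\<sigma>))) = b / norm \<rho>"
      using brf_norm_real[OF nz, of "1-\<sigma>"] True by (simp only: True if_True b_def)
    have "a \<le> 3 * b" using ab a0 by simp
    thus ?thesis unfolding q1 q2 using nz by (simp add: divide_right_mono)
  next
    case False
    have q1: "norm (brfactor \<rho> (of_real \<sigma>)) = a^2 / norm \<rho>^2"
      using brf_norm_real[OF nz, of \<sigma>] False by (simp only: False if_False a_def)
    have q2: "norm (brfactor \<rho> (of_real (1-\<sigma>))) = b^2 / norm \<rho>^2"
      using brf_norm_real[OF nz, of "1-\<sigma>"] False by (simp only: False if_False b_def)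
    have "a^2 \<le> ((5/3) * b)^2" using ab a0 by (intro power_mono) auto
    also have "\<dots> \<le> 3 * b^2" by (simp add: power2_eq_square)
    finally have "a^2 \<le> 3 * b^2" .
    thus ?thesis unfolding q1 q2 using nz by (simp add: divide_right_mono)
  qed
qed


lemma pair_factor:
  assumes "\<rho> \<noteq> 0"
  shows "(1 - s/\<rho>) * exp (s/\<rho>) * (if \<rho> \<in> \<real> then 1 else (1 - s/cnj \<rho>) * exp (s/cnj \<rho>))
       = brfactor \<rho> s * exp (s * (1/\<rho> + (if \<rho> \<in> \<real> then 0 else 1 / cnj \<rho>)))"
  by (cases "\<rho> \<in> \<real>") (simp_all add: brfactor_def exp_add algebra_simps)

lemma w_bound:
  assumes "\<rho> \<noteq> 0" "\<bar>Re \<rho>\<bar> \<le> K" "\<rho> \<in> \<real> \<Longrightarrow> norm \<rho> \<le> K"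
  shows "norm (1/\<rho> + (if \<rho> \<in> \<real> then 0 else 1 / cnj \<rho>)) \<le> 2 * K * (1 / norm \<rho> ^ 2)"
proof (cases "\<rho> \<in> \<real>")
  case True
  have K0: "K \<ge> 0" using assms(2) by linarith
  have "norm (1/\<rho> + (if \<rho> \<in> \<real> then 0 else 1 / cnj \<rho>)) = norm \<rho> / norm \<rho> ^ 2"
    using True assms(1) by (simp add: norm_divide power2_eq_square)
  also have "\<dots> \<le> K / norm \<rho> ^ 2" using assms(3)[OF True] by (intro divide_right_mono) auto
  also have "\<dots> \<le> 2 * K * (1 / norm \<rho> ^ 2)" using K0 by (simp add: divide_right_mono)
  finally show ?thesis .
next
  case False
  have c0: "cnj \<rho> \<noteq> 0" using assms by simp
  have "1/\<rho> + 1 / cnj \<rho> = (\<rho> + cnj \<rho>) / (\<rho> * cnj \<rho>)" using assms(1) c0 by (simp add: field_simps)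
  also have "\<dots> = of_real (2 * Re \<rho>) / of_real (norm \<rho> ^ 2)"
    by (simp only: complex_add_cnj complex_norm_square[symmetric])
  finally have "norm (1/\<rho> + 1 / cnj \<rho>) = 2 * \<bar>Re \<rho>\<bar> / norm \<rho> ^ 2"
    by (simp only: norm_divide norm_of_real abs_of_nonneg[OF zero_le_power2] abs_mult)
  also have "\<dots> \<le> 2 * K / norm \<rho> ^ 2" using assms(2) by (intro divide_right_mono) auto
  finally show ?thesis using False by simp
qed


theorem lemma5p1:
  fixes F :: "complex \<Rightarrow> complex"
  assumes genus: "genus_le_one F"
    and real_axis: "\<forall>x::real. F (of_real x) \<in> \<real>"
    and strip: "\<exists>\<sigma>0::real. \<sigma>0 < 1/2 \<and>
                  finite {z. F z = 0 \<and> \<not> (\<sigma>0 < Re z \<and> Re z < 1/2)}"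
    and right: "finite {z. F z = 0 \<and> Re z \<ge> 1/2}"
    and count: "\<exists>C>0. eventually (\<lambda>T. real (zero_count F T) \<le> C * T * ln T) at_top"
    and ratio_pos: "eventually (\<lambda>\<sigma>::real. Re (F (of_real (1 - \<sigma>)) / F (of_real \<sigma>)) > 0) at_top"
    and ratio_lim: "((\<lambda>\<sigma>::real. F (of_real (1 - \<sigma>)) / F (of_real \<sigma>)) \<longlongrightarrow> 0) at_top"
  shows "\<exists>(C::complex) (m::nat) (B'::real) (P::complex \<Rightarrow> complex). B' \<ge> 0 \<and>
           (\<forall>s. (\<lambda>p. norm (brfactor (fst p) s - 1)) summable_on prod_index F) \<and>
           (\<forall>K. compact K \<longrightarrow>
              uniform_limit K (\<lambda>X s. \<Prod>p\<in>X. brfactor (fst p) s) P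
                (finite_subsets_at_top (prod_index F))) \<and>
           (\<forall>s. F s = C * s ^ m * exp (of_real B' * s) * P s)"
proof -
  have hol: "F holomorphic_on UNIV" using genus unfolding genus_le_one_def by blast
  define Z where "Z = {p \<in> zeros_mult F. fst p \<noteq> 0}"
  define I where "I = prod_index F"
  obtain a b :: complex and m :: nat where
    sumZ: "(\<lambda>p. 1 / norm (fst p) ^ 2) summable_on Z" and
    limZ: "\<And>s. ((\<lambda>X. exp (a + b * s) * s ^ m * (\<Prod>p\<in>X. (1 - s / fst p) * exp (s / fst p))) \<longlongrightarrow> F s)
             (finite_subsets_at_top Z)"
    using genus unfolding genus_le_one_def Z_def by blast
  obtain \<sigma>0 where \<sigma>0: "\<sigma>0 < 1/2" and finZx: "finite {z. F z = 0 \<and> \<not> (\<sigma>0 < Re z \<and> Re z < 1/2)}"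
    using strip by blast
  define Zx where "Zx = {z. F z = 0 \<and> \<not> (\<sigma>0 < Re z \<and> Re z < 1/2)}"
  obtain \<sigma>1 where \<sigma>1: "\<And>\<sigma>. \<sigma> \<ge> \<sigma>1 \<Longrightarrow> F (of_real \<sigma>) \<noteq> 0"
  proof -
    from ratio_pos obtain N where N: "\<And>\<sigma>. \<sigma> \<ge> N \<Longrightarrow> Re (F (of_real (1-\<sigma>)) / F (of_real \<sigma>)) > 0"
      by (auto simp: eventually_at_top_linorder)
    have "F (of_real \<sigma>) \<noteq> 0" if "\<sigma> \<ge> N" for \<sigma>
    proof
      assume "F (of_real \<sigma>) = 0"
      thus False using N[OF that] by simp
    qed
    thus thesis using that by blast
  qed
  have Fnz: "F (of_real \<sigma>1) \<noteq> 0" using \<sigma>1 by simp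
  have refl: "\<And>z. F (cnj z) = cnj (F z)" using refl_F[OF hol real_axis] .
  have zm: "\<And>z. zero_mult F (cnj z) = zero_mult F z"
    using zorder_cnj[OF hol refl Fnz] refl unfolding zero_mult_def by auto
  define c where "c = (\<lambda>p::complex \<times> nat. (cnj (fst p), snd p))"
  have cZ: "\<And>p. p \<in> Z \<Longrightarrow> c p \<in> Z" using refl zm unfolding Z_def zeros_mult_def c_def by auto
  have cc: "\<And>p. c (c p) = p" unfolding c_def by auto
  have IZ: "I \<subseteq> Z" unfolding I_def Z_def prod_index_def by auto
  have Ichar: "\<And>p. p \<in> I \<longleftrightarrow> p \<in> Z \<and> (fst p \<in> \<real> \<or> Im (fst p) > 0)"
    unfolding I_def Z_def prod_index_def by auto
  have memZ: "\<And>p. p \<in> Z \<Longrightarrow> F (fst p) = 0 \<and> fst p \<noteq> 0" unfolding Z_def zeros_mult_def by auto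
  have memI: "F (fst p) = 0 \<and> fst p \<noteq> 0" if "p \<in> I" for p
  proof -
    have "p \<in> Z" using IZ that by blast
    thus ?thesis by (rule memZ)
  qed
  obtain Bx where Bx: "\<And>z. z \<in> Zx \<Longrightarrow> norm z \<le> Bx"
    using finite_imp_bounded[OF finZx] unfolding bounded_iff Zx_def by blast
  define Kb where "Kb = \<bar>Bx\<bar> + \<bar>\<sigma>0\<bar> + 1"
  have Kb0: "Kb \<ge> 0" unfolding Kb_def by simp
  have Kre: "\<bar>Re z\<bar> \<le> Kb" if "F z = 0" for z
  proof (cases "z \<in> Zx")
    case True
    thus ?thesis using Bx[OF True] abs_Re_le_cmod[of z] unfolding Kb_def by linarith
  next
    case False
    hence "\<sigma>0 < Re z" "Re z < 1/2" using that unfolding Zx_def by auto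
    thus ?thesis unfolding Kb_def by linarith
  qed
  have Kreal: "norm z \<le> Kb" if "F z = 0" "z \<in> \<real>" for z
  proof -
    from that(2) obtain r where "z = of_real r" by (auto elim: Reals_cases)
    hence "norm z = \<bar>Re z\<bar>" by simp
    thus ?thesis using Kre[OF that(1)] by simp
  qed
  have brfb: "norm (brfactor (fst p) s - 1) \<le> (2*Kb*norm s + norm s^2) * (1 / norm (fst p)^2)"
    if "p \<in> I" for p s
  proof -
    have "F (fst p) = 0" "fst p \<noteq> 0" using memI[OF that] by auto
    thus ?thesis using brf_bound[of "fst p" Kb s] Kre Kreal by simp
  qed
  have sumI: "(\<lambda>p. 1 / norm (fst p)^2) summable_on I" using summable_on_subset_banach[OF sumZ IZ] .
  define w where "w = (\<lambda>p::complex\<times>nat. 1/fst p + (if fst p \<in> \<real> then 0 else 1 / cnj (fst p)))"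
  have wb: "norm (w p) \<le> 2*Kb * (1/norm (fst p)^2)" if "p \<in> I" for p
  proof -
    have "F (fst p) = 0" "fst p \<noteq> 0" using memI[OF that] by auto
    thus ?thesis unfolding w_def using w_bound[of "fst p" Kb] Kre Kreal by simp
  qed
  have wsum: "w summable_on I"
  proof (rule abs_summable_summable)
    show "(\<lambda>p. norm (w p)) summable_on I"
      by (rule Infinite_Sum.abs_summable_on_comparison_test'[OF summable_on_cmult_right[OF sumI, of "2*Kb"]])
         (use wb in auto)
  qed
  define W where "W = infsum w I"
  define \<Phi> where "\<Phi> = (\<lambda>X. X \<union> c ` {p\<in>X. fst p \<notin> \<real>})"
  have nonreal_Im: "Im z \<noteq> 0" if "z \<notin> \<real>" for z
    using that by (auto simp: complex_is_Real_iff)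
  have cI: "c q \<in> I" if "q \<in> Z" "q \<notin> I" for q
  proof -
    have "fst q \<notin> \<real>" "\<not> Im (fst q) > 0" using that Ichar by auto
    hence "Im (fst q) < 0" using nonreal_Im by force
    hence "Im (fst (c q)) > 0" unfolding c_def by simp
    thus ?thesis using Ichar cZ[OF that(1)] by blast
  qed
  have \<Phi>lim: "filterlim \<Phi> (finite_subsets_at_top Z) (finite_subsets_at_top I)"
    unfolding filterlim_def le_filter_def eventually_filtermap
  proof (intro allI impI)
    fix Pr assume "eventually Pr (finite_subsets_at_top Z)"
    then obtain Y0 where Y0a: "finite Y0" "Y0 \<subseteq> Z" and
      Y0b: "\<forall>Y. finite Y \<and> Y0 \<subseteq> Y \<and> Y \<subseteq> Z \<longrightarrow> Pr Y"
      unfolding eventually_finite_subsets_at_top by (elim exE conjE)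
    define X0 where "X0 = (Y0 \<inter> I) \<union> c ` (Y0 - I)"
    have X0I: "X0 \<subseteq> I" unfolding X0_def using cI Y0a by auto
    have X0f: "finite X0" unfolding X0_def using Y0a by auto
    show "eventually (\<lambda>X. Pr (\<Phi> X)) (finite_subsets_at_top I)"
      unfolding eventually_finite_subsets_at_top
    proof (intro exI[of _ X0] conjI allI impI X0f X0I)
      fix X assume X: "finite X \<and> X0 \<subseteq> X \<and> X \<subseteq> I"
      have "finite (\<Phi> X)" unfolding \<Phi>_def using X by auto
      moreover have "\<Phi> X \<subseteq> Z" unfolding \<Phi>_def using X IZ cZ by auto
      moreover have "Y0 \<subseteq> \<Phi> X"
      proof
        fix q assume q: "q \<in> Y0"
        show "q \<in> \<Phi> X"
        proof (cases "q \<in> I")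
          case True thus ?thesis using q X unfolding \<Phi>_def X0_def by auto
        next
          case False
          have qZ: "q \<in> Z" using q Y0a by auto
          have "c q \<in> X" using q False X unfolding X0_def by auto
          moreover have "fst (c q) \<notin> \<real>"
            using False qZ Ichar unfolding c_def by (auto simp: Reals_cnj_iff)
          ultimately have "c (c q) \<in> c ` {p\<in>X. fst p \<notin> \<real>}" by auto
          thus ?thesis unfolding \<Phi>_def cc by auto
        qed
      qed
      ultimately show "Pr (\<Phi> X)" using Y0b by blast
    qed
  qed
  have \<Phi>prod: "(\<Prod>q\<in>\<Phi> X. (1 - s/fst q) * exp (s/fst q)) = (\<Prod>p\<in>X. brfactor (fst p) s) * exp (s * sum w X)"
    if "finite X" "X \<subseteq> I" for X s
  proof -
    define E where "E = (\<lambda>q::complex\<times>nat. (1 - s/fst q) * exp (s/fst q))"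
    define D where "D = {p\<in>X. fst p \<notin> \<real>}"
    have Df: "finite D" unfolding D_def using that by auto
    have injc: "inj_on c D" by (metis cc inj_on_inverseI)
    have disj: "X \<inter> c ` D = {}"
    proof (rule ccontr)
      assume "X \<inter> c ` D \<noteq> {}"
      then obtain d where d: "d \<in> D" "c d \<in> X" by auto
      have "d \<in> I" "fst d \<notin> \<real>" using d that unfolding D_def by auto
      hence "Im (fst d) > 0" using Ichar by auto
      hence "Im (fst (c d)) < 0" unfolding c_def by simp
      moreover have "fst (c d) \<notin> \<real>" using \<open>fst d \<notin> \<real>\<close> unfolding c_def by (auto simp: Reals_cnj_iff)
      moreover have "c d \<in> I" using d(2) that by blast
      ultimately show False using Ichar[of "c d"] by auto
    qed
    have "(\<Prod>q\<in>\<Phi> X. E q) = (\<Prod>q\<in>X. E q) * (\<Prod>q\<in>c ` D. E q)"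
      unfolding \<Phi>_def D_def[symmetric] using that Df disj by (intro prod.union_disjoint) auto
    also have "(\<Prod>q\<in>c ` D. E q) = (\<Prod>q\<in>D. E (c q))" using prod.reindex[OF injc] by simp
    also have "\<dots> = (\<Prod>q\<in>X. if fst q \<notin> \<real> then E (c q) else 1)"
      unfolding D_def using prod.inter_filter[OF that(1), of "\<lambda>q. E (c q)" "\<lambda>q. fst q \<notin> \<real>"] by simp
    also have "(\<Prod>q\<in>X. E q) * \<dots> = (\<Prod>q\<in>X. E q * (if fst q \<notin> \<real> then E (c q) else 1))"
      by (simp add: prod.distrib)
    also have "\<dots> = (\<Prod>q\<in>X. brfactor (fst q) s * exp (s * w q))"
    proof (rule prod.cong)
      fix q assume "q \<in> X"
      hence "q \<in> I" using that by blast
      hence nz: "fst q \<noteq> 0" using memI by blast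
      show "E q * (if fst q \<notin> \<real> then E (c q) else 1) = brfactor (fst q) s * exp (s * w q)"
        using pair_factor[OF nz, of s] unfolding E_def w_def c_def by (cases "fst q \<in> \<real>") simp_all
    qed simp
    also have "\<dots> = (\<Prod>p\<in>X. brfactor (fst p) s) * exp (s * sum w X)"
      by (simp add: prod.distrib exp_sum[OF that(1)] sum_distrib_left)
    finally show ?thesis unfolding E_def .
  qed
  define P where "P = (\<lambda>s. if s = 0 then 1 else F s * exp (- (s * W)) / (exp (a + b * s) * s ^ m))"
  have wlim: "(sum w \<longlongrightarrow> W) (finite_subsets_at_top I)"
    using has_sum_infsum[OF wsum] unfolding W_def has_sum_def .
  have L3: "((\<lambda>X. exp (a + b * s) * s ^ m * ((\<Prod>p\<in>X. brfactor (fst p) s) * exp (s * sum w X))) \<longlongrightarrow> F s)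
              (finite_subsets_at_top I)" for s
  proof -
    have "((\<lambda>X. exp (a + b * s) * s ^ m * (\<Prod>q\<in>\<Phi> X. (1 - s / fst q) * exp (s / fst q))) \<longlongrightarrow> F s)
              (finite_subsets_at_top I)"
      using filterlim_compose[OF limZ[of s] \<Phi>lim] by simp
    moreover have "eventually (\<lambda>X. exp (a + b * s) * s ^ m * (\<Prod>q\<in>\<Phi> X. (1 - s / fst q) * exp (s / fst q))
        = exp (a + b * s) * s ^ m * ((\<Prod>p\<in>X. brfactor (fst p) s) * exp (s * sum w X))) (finite_subsets_at_top I)"
      using \<Phi>prod by (intro eventually_finite_subsets_at_top_weakI) simp
    ultimately show ?thesis using Lim_transform_eventually by fastforce
  qed
  have Plim: "((\<lambda>X. \<Prod>p\<in>X. brfactor (fst p) s) \<longlongrightarrow> P s) (finite_subsets_at_top I)" for s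
  proof (cases "s = 0")
    case True thus ?thesis unfolding P_def by simp
  next
    case False
    have nz: "exp (a + b * s) * s ^ m \<noteq> 0" using False by simp
    have "((\<lambda>X. exp (a + b * s) * s ^ m * ((\<Prod>p\<in>X. brfactor (fst p) s) * exp (s * sum w X))
              * exp (- (s * sum w X)) / (exp (a + b * s) * s ^ m))
          \<longlongrightarrow> F s * exp (- (s * W)) / (exp (a + b * s) * s ^ m)) (finite_subsets_at_top I)"
      by (intro tendsto_intros L3 wlim nz)
    moreover have "exp (a + b * s) * s ^ m * ((\<Prod>p\<in>X. brfactor (fst p) s) * exp (s * sum w X))
              * exp (- (s * sum w X)) / (exp (a + b * s) * s ^ m) = (\<Prod>p\<in>X. brfactor (fst p) s)" for X
      using nz by (simp add: exp_minus field_simps)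
    ultimately show ?thesis using False unfolding P_def by simp
  qed
  have Frep: "F s = exp a * s ^ m * exp ((b + W) * s) * P s" for s
  proof (cases "s = 0")
    case True
    have "((\<lambda>X. exp (a + b * s) * s ^ m * (\<Prod>p\<in>X. (1 - s / fst p) * exp (s / fst p))) \<longlongrightarrow> exp a * 0 ^ m)
             (finite_subsets_at_top Z)"
      using True by simp
    hence "F s = exp a * 0 ^ m" using limZ[of s] tendsto_unique finite_subsets_at_top_neq_bot by blast
    thus ?thesis using True unfolding P_def by simp
  next
    case False
    have nz: "exp (a + b * s) * s ^ m \<noteq> 0" using False by simp
    have e1: "exp (W * s) * exp (- (s * W)) = 1" by (simp add: exp_minus mult.commute)
    have e2: "exp a * exp (b * s) = exp (a + b * s)" by (simp add: exp_add)
    have "exp a * s ^ m * exp ((b + W) * s) * P s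
        = (exp a * exp (b * s)) * (exp (W * s) * exp (- (s * W))) * s ^ m * F s / (exp (a + b * s) * s ^ m)"
      using False unfolding P_def by (simp add: algebra_simps exp_add)
    also have "\<dots> = (exp (a + b * s) * s ^ m) * F s / (exp (a + b * s) * s ^ m)"
      by (simp only: e1 e2 mult_1_right mult.assoc)
    also have "\<dots> = F s" using nz by simp
    finally show ?thesis ..
  qed
  have Preal: "P (of_real x) \<in> \<real>" for x :: real
  proof (rule Lim_in_closed_set[OF closed_complex_Reals _ finite_subsets_at_top_neq_bot Plim])
    show "eventually (\<lambda>X. (\<Prod>p\<in>X. brfactor (fst p) (of_real x)) \<in> \<real>) (finite_subsets_at_top I)"
      by (intro always_eventually allI prod_in_Reals brf_real_arg)
  qed
  have ImB: "Im (b+W) = 0"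
  proof (rule ccontr)
    assume nI: "Im (b + W) \<noteq> 0"
    define Bc where "Bc = b + W"
    define \<sigma>' where "\<sigma>' = max \<sigma>1 1"
    define Q where "Q = (\<lambda>\<sigma>::real. F (of_real \<sigma>) / ((of_real \<sigma>) ^ m * P (of_real \<sigma>)))"
    have Qeq: "Q \<sigma> = exp a * exp (Bc * of_real \<sigma>)" if "\<sigma> \<ge> \<sigma>'" for \<sigma>
    proof -
      have "F (of_real \<sigma>) \<noteq> 0" using \<sigma>1 that \<sigma>'_def by auto
      hence pn: "P (of_real \<sigma>) \<noteq> 0" using Frep[of "of_real \<sigma>"] by auto
      have sn: "(of_real \<sigma> :: complex) ^ m \<noteq> 0" using that \<sigma>'_def by auto
      have "Q \<sigma> = exp a * (of_real \<sigma>) ^ m * exp (Bc * of_real \<sigma>) * P (of_real \<sigma>) / ((of_real \<sigma>) ^ m * P (of_real \<sigma>))"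
        unfolding Q_def Bc_def by (subst Frep) simp
      also have "\<dots> = exp a * exp (Bc * of_real \<sigma>)" using pn sn by (simp add: field_simps)
      finally show ?thesis .
    qed
    have Qreal: "Q \<sigma> \<in> \<real>" for \<sigma> unfolding Q_def using real_axis Preal
      by (intro Reals_divide Reals_mult Reals_power) auto
    have sin0: "sin (Im Bc * t) = 0" if "t \<ge> 0" for t
    proof -
      have "Q (\<sigma>' + t) / Q \<sigma>' = exp (Bc * of_real t)"
        using Qeq[of "\<sigma>'+t"] Qeq[of \<sigma>'] that by (simp add: distrib_left exp_add)
      hence "exp (Bc * of_real t) \<in> \<real>" using Qreal by (metis Reals_divide)
      hence "Im (exp (Bc * of_real t)) = 0" by (simp add: complex_is_Real_iff)
      thus ?thesis by (simp add: Im_exp)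
    qed
    have nI': "Im Bc \<noteq> 0" using nI Bc_def by simp
    define t where "t = pi / (2 * \<bar>Im Bc\<bar>)"
    have t0: "t \<ge> 0" unfolding t_def by simp
    have "Im Bc * t = pi/2 \<or> Im Bc * t = - (pi/2)"
      unfolding t_def using nI' by (cases "Im Bc > 0") (auto simp: field_simps)
    hence "sin (Im Bc * t) \<noteq> 0" by (elim disjE) (metis sin_pi_half one_neq_zero, metis sin_pi_half sin_minus neg_equal_0_iff_equal one_neq_zero)
    thus False using sin0[OF t0] by simp
  qed
  define B' where "B' = Re (b+W)"
  have BB: "of_real B' = b + W" using ImB unfolding B'_def by (simp add: complex_eq_iff)
  have Bpos: "B' \<ge> 0"
  proof (rule ccontr)
    assume "\<not> B' \<ge> 0"
    hence Bneg: "B' < 0" by simp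
    define \<epsilon> where "\<epsilon> = - B'"
    have \<epsilon>0: "\<epsilon> > 0" using Bneg \<epsilon>_def by simp
    define Ex where "Ex = {p \<in> I. \<not> (\<sigma>0 < Re (fst p) \<and> Re (fst p) < 1/2)}"
    have Exf: "finite Ex"
    proof (rule finite_subset)
      show "Ex \<subseteq> Sigma Zx (\<lambda>z. {..<zero_mult F z})"
        unfolding Ex_def Zx_def by (auto simp: I_def prod_index_def zeros_mult_def)
      show "finite (Sigma Zx (\<lambda>z. {..<zero_mult F z}))" using finZx unfolding Zx_def by (intro finite_SigmaI) auto
    qed
    obtain L where L: "\<And>p. p \<in> Ex \<Longrightarrow> norm (fst p) \<le> L"
    proof -
      have "finite (fst ` Ex)" using Exf by simp
      hence "bounded (fst ` Ex)" by (rule finite_imp_bounded)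
      then obtain L where "\<forall>z\<in>fst ` Ex. norm z \<le> L" unfolding bounded_iff by blast
      thus thesis using that by auto
    qed
    define L' where "L' = \<bar>L\<bar>"
    define u where "u = (\<lambda>(\<sigma>::real) (p::complex\<times>nat).
        (2*\<sigma>-1)*(1-2*Re (fst p))/((\<sigma>-1+Re (fst p))^2 + (Im (fst p))^2))"
    define D where "D = 2*(1+2*Kb)*(Kb^2+1)"
    have D0: "D > 0"
    proof -
      have "Kb^2 + 1 > 0" by (smt (verit) zero_le_power2)
      moreover have "1 + 2*Kb > 0" using Kb0 by simp
      ultimately show ?thesis unfolding D_def by simp
    qed
    define M0 where "M0 = (\<lambda>p::complex\<times>nat. 1 / norm (fst p)^2)"
    have strip_mem: "\<sigma>0 < Re (fst p) \<and> Re (fst p) < 1/2" "p \<in> I" if "p \<in> I - Ex" for p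
      using that unfolding Ex_def by auto
    have RS: "norm (brfactor (fst p) (of_real \<sigma>)) \<le> (1 + u \<sigma> p) * norm (brfactor (fst p) (of_real (1-\<sigma>)))"
       "0 \<le> u \<sigma> p" "u \<sigma> p \<le> \<sigma> * D * M0 p" "u \<sigma> p \<le> 2*\<sigma>*(1+2*Kb)/(\<sigma>-1-Kb)^2"
      if "p \<in> I - Ex" "\<sigma> \<ge> Kb + 2" for p \<sigma>
    proof -
      have pI: "p \<in> I" and hb: "Re (fst p) < 1/2" using strip_mem[OF that(1)] by auto
      have nz: "fst p \<noteq> 0" and Fz: "F (fst p) = 0" using memI[OF pI] by auto
      note R = ratio_strip[OF nz hb Kre[OF Fz] that(2)]
      show "norm (brfactor (fst p) (of_real \<sigma>)) \<le> (1 + u \<sigma> p) * norm (brfactor (fst p) (of_real (1-\<sigma>)))"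
        using R(1) unfolding u_def by simp
      show "0 \<le> u \<sigma> p" using R(2) unfolding u_def by simp
      show "u \<sigma> p \<le> 2*\<sigma>*(1+2*Kb)/(\<sigma>-1-Kb)^2" using R(4) unfolding u_def by simp
      have "u \<sigma> p \<le> 2*\<sigma>*(1+2*Kb)*(Kb^2+1) / norm (fst p)^2" using R(3) unfolding u_def by simp
      also have "\<dots> = \<sigma> * D * M0 p" unfolding D_def M0_def by simp
      finally show "u \<sigma> p \<le> \<sigma> * D * M0 p" .
    qed
    have sM0: "M0 summable_on (I - Ex)" unfolding M0_def by (rule summable_on_subset_banach[OF sumI]) auto
    have usum: "u \<sigma> summable_on (I - Ex)" if "\<sigma> \<ge> Kb + 2" for \<sigma>
      by (rule summable_on_comparison_test[OF summable_on_cmult_right[OF sM0, of "\<sigma> * D"]])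
         (use RS that in auto)
    define U where "U = (\<lambda>\<sigma>. infsum (u \<sigma>) (I - Ex))"
    define \<sigma>2 where "\<sigma>2 = max (Kb + 2) (4*(L'+1))"
    have claimA: "norm (P (of_real \<sigma>)) \<le> 3 ^ card Ex * exp (U \<sigma>) * norm (P (of_real (1-\<sigma>)))"
      if "\<sigma> \<ge> \<sigma>2" for \<sigma>
    proof -
      have sK: "\<sigma> \<ge> Kb + 2" and sL: "\<sigma> \<ge> 4*(L'+1)" using that unfolding \<sigma>2_def by auto
      define c3 where "c3 = 3 ^ card Ex * exp (U \<sigma>)"
      have fb: "norm (\<Prod>p\<in>X. brfactor (fst p) (of_real \<sigma>)) \<le> c3 * norm (\<Prod>p\<in>X. brfactor (fst p) (of_real (1-\<sigma>)))"
        if "finite X" "X \<subseteq> I" for X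
      proof -
        define h where "h = (\<lambda>p. if p \<in> Ex then 3 else 1 + u \<sigma> p)"
        have "norm (\<Prod>p\<in>X. brfactor (fst p) (of_real \<sigma>)) = (\<Prod>p\<in>X. norm (brfactor (fst p) (of_real \<sigma>)))"
          by (simp add: prod_norm)
        also have "\<dots> \<le> (\<Prod>p\<in>X. h p * norm (brfactor (fst p) (of_real (1-\<sigma>))))"
        proof (rule prod_mono)
          fix p assume "p \<in> X"
          hence pI: "p \<in> I" using that by blast
          have "norm (brfactor (fst p) (of_real \<sigma>)) \<le> h p * norm (brfactor (fst p) (of_real (1-\<sigma>)))"
          proof (cases "p \<in> Ex")
            case True
            have nz: "fst p \<noteq> 0" using memI[OF pI] by auto
            have "norm (fst p) \<le> L'" using L[OF True] unfolding L'_def by linarith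
            from ratio_exc[OF nz this sL] show ?thesis using True unfolding h_def by simp
          next
            case False
            hence "p \<in> I - Ex" using pI by blast
            from RS(1)[OF this sK] show ?thesis using False unfolding h_def by simp
          qed
          thus "0 \<le> norm (brfactor (fst p) (of_real \<sigma>)) \<and>
                norm (brfactor (fst p) (of_real \<sigma>)) \<le> h p * norm (brfactor (fst p) (of_real (1-\<sigma>)))" by simp
        qed
        also have "\<dots> = (\<Prod>p\<in>X. h p) * (\<Prod>p\<in>X. norm (brfactor (fst p) (of_real (1-\<sigma>))))"
          by (simp add: prod.distrib)
        also have "(\<Prod>p\<in>X. h p) \<le> c3"
        proof -
          have eh: "(\<Prod>p\<in>X. h p) = (\<Prod>p\<in>X \<inter> Ex. 3) * (\<Prod>p\<in>X - Ex. 1 + u \<sigma> p)"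
            unfolding h_def using prod.If_cases[OF that(1), of "\<lambda>p. p \<in> Ex" "\<lambda>_. 3" "\<lambda>p. 1 + u \<sigma> p"]
            by (simp add: Diff_eq)
          have a3: "(\<Prod>p\<in>X \<inter> Ex. (3::real)) \<le> 3 ^ card Ex"
          proof -
            have "card (X \<inter> Ex) \<le> card Ex" using Exf by (intro card_mono) auto
            hence "(3::real) ^ card (X \<inter> Ex) \<le> 3 ^ card Ex" by (intro power_increasing) auto
            thus ?thesis by simp
          qed
          have b3: "(\<Prod>p\<in>X - Ex. 1 + u \<sigma> p) \<le> exp (sum (u \<sigma>) (X - Ex))"
            by (rule prod_le_exp_sum) (use RS(2) sK that in auto)
          have "sum (u \<sigma>) (X - Ex) \<le> U \<sigma>"
          proof -
            have "sum (u \<sigma>) (X - Ex) = infsum (u \<sigma>) (X - Ex)" using that by simp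
            also have "\<dots> \<le> infsum (u \<sigma>) (I - Ex)"
              by (rule infsum_mono_neutral) (use that usum[OF sK] RS(2) sK in auto)
            finally show ?thesis unfolding U_def .
          qed
          hence "exp (sum (u \<sigma>) (X - Ex)) \<le> exp (U \<sigma>)" by simp
          hence b4: "(\<Prod>p\<in>X - Ex. 1 + u \<sigma> p) \<le> exp (U \<sigma>)" using b3 by linarith
          have pu0: "(\<Prod>p\<in>X - Ex. 1 + u \<sigma> p) \<ge> 0"
            by (rule prod_nonneg) (use RS(2) sK that in \<open>auto intro: add_nonneg_nonneg\<close>)
          show ?thesis unfolding eh c3_def by (rule mult_mono[OF a3 b4]) (use pu0 in auto)

        qed
        hence "(\<Prod>p\<in>X. h p) * (\<Prod>p\<in>X. norm (brfactor (fst p) (of_real (1-\<sigma>))))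
             \<le> c3 * (\<Prod>p\<in>X. norm (brfactor (fst p) (of_real (1-\<sigma>))))"
          by (intro mult_right_mono prod_nonneg) auto
        finally show ?thesis by (simp add: prod_norm)
      qed
      have l1: "((\<lambda>X. norm (\<Prod>p\<in>X. brfactor (fst p) (of_real \<sigma>))) \<longlongrightarrow> norm (P (of_real \<sigma>))) (finite_subsets_at_top I)"
        by (intro tendsto_norm Plim)
      have l2: "((\<lambda>X. c3 * norm (\<Prod>p\<in>X. brfactor (fst p) (of_real (1-\<sigma>)))) \<longlongrightarrow> c3 * norm (P (of_real (1-\<sigma>))))
          (finite_subsets_at_top I)"
        by (intro tendsto_intros Plim)
      have "norm (P (of_real \<sigma>)) \<le> c3 * norm (P (of_real (1-\<sigma>)))"
        by (rule tendsto_le[OF finite_subsets_at_top_neq_bot l2 l1])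
           (intro eventually_finite_subsets_at_top_weakI fb)
      thus ?thesis unfolding c3_def .
    qed
    obtain T where T: "finite T" "T \<subseteq> I - Ex" "infsum M0 ((I - Ex) - T) \<le> \<epsilon> / (2*D)"
    proof -
      have e2: "\<epsilon> / (2*D) > 0" using \<epsilon>0 D0 by simp
      obtain T where T: "finite T" "T \<subseteq> I - Ex" "dist (sum M0 T) (infsum M0 (I - Ex)) \<le> \<epsilon> / (2*D)"
        using has_sum_finite_approximation[OF has_sum_infsum[OF sM0] e2] by blast
      have "infsum M0 ((I - Ex) - T) = infsum M0 (I - Ex) - infsum M0 T"
        by (rule infsum_Diff[OF sM0 summable_on_finite[OF T(1)] T(2)])
      also have "infsum M0 T = sum M0 T" using T(1) by simp
      finally have "infsum M0 ((I - Ex) - T) \<le> \<epsilon> / (2*D)" using T(3) unfolding dist_real_def by linarith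
      thus thesis using that T(1,2) by blast
    qed
    define q where "q = 4 * real (card T) * (1 + 2*Kb) / \<epsilon>"
    have q0: "q \<ge> 0" unfolding q_def using \<epsilon>0 Kb0 by simp
    define \<sigma>3 where "\<sigma>3 = max \<sigma>2 (Kb + 2 + q)"
    have claimB: "U \<sigma> \<le> \<epsilon> * \<sigma>" if "\<sigma> \<ge> \<sigma>3" for \<sigma>
    proof -
      have sK: "\<sigma> \<ge> Kb + 2" using that unfolding \<sigma>3_def \<sigma>2_def by auto
      have sq: "\<sigma> \<ge> Kb + 2 + q" using that unfolding \<sigma>3_def by auto
      have s0: "\<sigma> \<ge> 0" using sK Kb0 by linarith
      have us: "u \<sigma> summable_on (I - Ex)" by (rule usum[OF sK])
      have "infsum (u \<sigma>) ((I - Ex) - T) = U \<sigma> - infsum (u \<sigma>) T"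
        unfolding U_def by (rule infsum_Diff[OF us summable_on_finite[OF T(1)] T(2)])
      hence Usplit: "U \<sigma> = sum (u \<sigma>) T + infsum (u \<sigma>) ((I - Ex) - T)" using T(1) by simp
      have t1: "infsum (u \<sigma>) ((I - Ex) - T) \<le> \<sigma> * \<epsilon> / 2"
      proof -
        have sub: "(I - Ex) - T \<subseteq> I - Ex" by blast
        have "infsum (u \<sigma>) ((I - Ex) - T) \<le> infsum (\<lambda>p. (\<sigma> * D) * M0 p) ((I - Ex) - T)"
          by (rule infsum_mono[OF summable_on_subset_banach[OF us sub]
                summable_on_cmult_right[OF summable_on_subset_banach[OF sM0 sub]]])
             (use RS(3) sK in auto)
        also have "\<dots> = (\<sigma> * D) * infsum M0 ((I - Ex) - T)" by (rule infsum_cmult_right')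
        also have "\<dots> \<le> (\<sigma> * D) * (\<epsilon> / (2*D))" using T(3) s0 D0 by (intro mult_left_mono) auto
        also have "\<dots> = \<sigma> * \<epsilon> / 2" using D0 by simp
        finally show ?thesis .
      qed
      have t2: "sum (u \<sigma>) T \<le> real (card T) * (2*\<sigma>*(1+2*Kb)/(\<sigma>-1-Kb)^2)"
        by (rule sum_bounded_above) (use RS(4) sK T(2) in auto)
      have t3: "real (card T) * (2*\<sigma>*(1+2*Kb)/(\<sigma>-1-Kb)^2) \<le> \<sigma> * \<epsilon> / 2"
      proof -
        define y where "y = \<sigma> - 1 - Kb"
        have y1: "y \<ge> 1" "y \<ge> q" unfolding y_def using sK sq q0 by auto
        have "q \<le> y" by (rule y1(2))
        also have "y \<le> y^2" using y1(1) by (simp add: power2_eq_square)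
        finally have qy: "q \<le> y^2" .
        have ypos: "y^2 > 0" using y1 by simp
        have "real (card T) * (2*\<sigma>*(1+2*Kb)) = \<sigma> * \<epsilon> / 2 * q"
          unfolding q_def using \<epsilon>0 by (simp add: field_simps)
        also have "\<dots> \<le> \<sigma> * \<epsilon> / 2 * y^2" using qy s0 \<epsilon>0 by (intro mult_left_mono) auto
        finally have "real (card T) * (2*\<sigma>*(1+2*Kb)) \<le> \<sigma> * \<epsilon> / 2 * y^2" .
        hence "real (card T) * (2*\<sigma>*(1+2*Kb)) / y^2 \<le> \<sigma> * \<epsilon> / 2" using ypos
          by (simp add: divide_le_eq)
        thus ?thesis unfolding y_def by simp
      qed
      have "\<epsilon> * \<sigma> = \<sigma> * \<epsilon> / 2 + \<sigma> * \<epsilon> / 2" by simp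
      thus ?thesis using Usplit t1 t2 t3 by linarith
    qed
    define \<sigma>4 where "\<sigma>4 = max \<sigma>3 (max \<sigma>1 2)"
    define c0 where "c0 = exp B' / (2 ^ m * 3 ^ card Ex)"
    have c0pos: "c0 > 0" unfolding c0_def by simp
    have lowC: "norm (F (of_real (1-\<sigma>)) / F (of_real \<sigma>)) \<ge> c0" if "\<sigma> \<ge> \<sigma>4" for \<sigma>
    proof -
      have s3: "\<sigma> \<ge> \<sigma>3" and s2: "\<sigma> \<ge> \<sigma>2" and s1: "\<sigma> \<ge> \<sigma>1" and sg2: "\<sigma> \<ge> 2"
        using that unfolding \<sigma>4_def \<sigma>3_def by auto
      have Fn: "F (of_real \<sigma>) \<noteq> 0" using \<sigma>1 s1 by blast
      define E0 where "E0 = norm (exp a)"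
      define nP1 where "nP1 = norm (P (of_real (1-\<sigma>)))"
      have E00: "E0 \<ge> 0" and nP10: "nP1 \<ge> 0" unfolding E0_def nP1_def by auto
      have Fr: "F s = exp a * s ^ m * exp (of_real B' * s) * P s" for s using Frep[of s] BB by simp
      have nF: "norm (F (of_real \<sigma>)) = E0 * \<sigma>^m * exp (B'*\<sigma>) * norm (P (of_real \<sigma>))"
      proof -
        have "norm (F (of_real \<sigma>)) = E0 * norm (of_real \<sigma> :: complex)^m * norm (exp (of_real (B' * \<sigma>) :: complex)) * norm (P (of_real \<sigma>))"
          unfolding E0_def by (subst Fr) (simp add: norm_mult norm_power)
        also have "norm (of_real \<sigma> :: complex) = \<sigma>" using sg2 by simp
        also have "norm (exp (of_real (B' * \<sigma>) :: complex)) = exp (B' * \<sigma>)" by (simp only: norm_exp_eq_Re Re_complex_of_real)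
        finally show ?thesis .
      qed
      have nF1: "norm (F (of_real (1-\<sigma>))) = E0 * (\<sigma>-1)^m * exp (B'*(1-\<sigma>)) * nP1"
      proof -
        have "norm (F (of_real (1-\<sigma>))) = E0 * norm (of_real (1-\<sigma>) :: complex)^m * norm (exp (of_real (B' * (1-\<sigma>)) :: complex)) * nP1"
          unfolding E0_def nP1_def by (subst Fr) (simp add: norm_mult norm_power del: of_real_diff)
        also have "norm (of_real (1-\<sigma>) :: complex) = \<sigma> - 1" using sg2 by (simp only: norm_of_real)
        also have "norm (exp (of_real (B' * (1-\<sigma>)) :: complex)) = exp (B' * (1-\<sigma>))" by (simp only: norm_exp_eq_Re Re_complex_of_real)
        finally show ?thesis .
      qed
      have A: "norm (P (of_real \<sigma>)) \<le> 3 ^ card Ex * exp (U \<sigma>) * nP1" unfolding nP1_def by (rule claimA[OF s2])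
      have B: "U \<sigma> \<le> \<epsilon> * \<sigma>" by (rule claimB[OF s3])
      define G where "G = E0 * \<sigma>^m * nP1 / 2^m"
      have G0: "G \<ge> 0" unfolding G_def using E00 nP10 sg2 by simp
      have i: "c0 * norm (F (of_real \<sigma>)) \<le> G * exp (B' + B'*\<sigma> + U \<sigma>)"
      proof -
        have "c0 * norm (F (of_real \<sigma>)) = (c0 * E0 * \<sigma>^m * exp (B'*\<sigma>)) * norm (P (of_real \<sigma>))"
          unfolding nF by (simp add: mult_ac)
        also have "\<dots> \<le> (c0 * E0 * \<sigma>^m * exp (B'*\<sigma>)) * (3 ^ card Ex * exp (U \<sigma>) * nP1)"
          using A c0pos E00 sg2 by (intro mult_left_mono) auto
        also have "\<dots> = G * exp (B' + B'*\<sigma> + U \<sigma>)"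
          unfolding c0_def G_def by (simp add: exp_add field_simps)
        finally show ?thesis .
      qed
      have ii: "exp (B' + B'*\<sigma> + U \<sigma>) \<le> exp (B'*(1-\<sigma>))"
      proof -
        have "- B' * \<sigma> \<ge> 0" using Bneg sg2 by (simp add: mult_nonpos_nonneg)
        hence "B' + B'*\<sigma> + U \<sigma> \<le> B'*(1-\<sigma>)" using B unfolding \<epsilon>_def by (simp add: algebra_simps)
        thus ?thesis by simp
      qed
      have iii: "G * exp (B'*(1-\<sigma>)) \<le> norm (F (of_real (1-\<sigma>)))"
      proof -
        have "(\<sigma>/2)^m \<le> (\<sigma>-1)^m" using sg2 by (intro power_mono) auto
        hence "E0 * (\<sigma>/2)^m * exp (B'*(1-\<sigma>)) * nP1 \<le> E0 * (\<sigma>-1)^m * exp (B'*(1-\<sigma>)) * nP1"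
          using E00 nP10 by (intro mult_right_mono mult_left_mono) auto
        moreover have "G * exp (B'*(1-\<sigma>)) = E0 * (\<sigma>/2)^m * exp (B'*(1-\<sigma>)) * nP1"
          unfolding G_def by (simp add: power_divide)
        ultimately show ?thesis unfolding nF1 by linarith
      qed
      have "c0 * norm (F (of_real \<sigma>)) \<le> norm (F (of_real (1-\<sigma>)))"
        using i mult_left_mono[OF ii G0] iii by linarith
      moreover have "norm (F (of_real \<sigma>)) > 0" using Fn by simp
      ultimately show ?thesis by (simp add: norm_divide le_divide_eq)
    qed
    have ev1: "eventually (\<lambda>\<sigma>. norm (F (of_real (1-\<sigma>)) / F (of_real \<sigma>)) < c0) at_top"
    proof -
      have "((\<lambda>\<sigma>::real. norm (F (of_real (1-\<sigma>)) / F (of_real \<sigma>))) \<longlongrightarrow> norm (0::complex)) at_top"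
        by (rule tendsto_norm[OF ratio_lim])
      hence "((\<lambda>\<sigma>::real. norm (F (of_real (1-\<sigma>)) / F (of_real \<sigma>))) \<longlongrightarrow> 0) at_top" by simp
      thus ?thesis using order_tendstoD(2) c0pos by blast
    qed
    have ev2: "eventually (\<lambda>\<sigma>. norm (F (of_real (1-\<sigma>)) / F (of_real \<sigma>)) \<ge> c0) at_top"
      using lowC by (auto simp: eventually_at_top_linorder)
    have "eventually (\<lambda>_::real. False) at_top"
      using eventually_conj[OF ev1 ev2] by (rule eventually_mono) auto
    thus False by simp
  qed
  show ?thesis
  proof (rule exI[of _ "exp a"], rule exI[of _ m], rule exI[of _ B'], rule exI[of _ P], intro conjI allI impI)
    show "B' \<ge> 0" by (rule Bpos)
  next
    fix s
    show "(\<lambda>p. norm (brfactor (fst p) s - 1)) summable_on prod_index F"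
      unfolding I_def[symmetric]
      by (rule summable_on_comparison_test[OF summable_on_cmult_right[OF sumI, of "2*Kb*norm s + norm s^2"]])
         (use brfb in auto)
  next
    fix s
    show "F s = exp a * s ^ m * exp (of_real B' * s) * P s" using Frep[of s] BB by simp
  next
    fix K :: "complex set" assume "compact K"
    hence "bounded K" by (rule compact_imp_bounded)
    then obtain R where R: "\<And>s. s \<in> K \<Longrightarrow> norm s \<le> R" unfolding bounded_iff by blast
    show "uniform_limit K (\<lambda>X s. \<Prod>p\<in>X. brfactor (fst p) s) P (finite_subsets_at_top (prod_index F))"
      unfolding I_def[symmetric]
    proof (rule unif_prod[OF summable_on_cmult_right[OF sumI, of "2*Kb*R + R^2"]])
      fix p s assume p: "p \<in> I" and s: "s \<in> K"
      have "norm (brfactor (fst p) s - 1) \<le> (2*Kb*norm s + norm s^2) * (1 / norm (fst p)^2)" by (rule brfb[OF p])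
      also have "\<dots> \<le> (2*Kb*R + R^2) * (1 / norm (fst p)^2)"
      proof (intro mult_right_mono add_mono)
        show "2*Kb*norm s \<le> 2*Kb*R" using R[OF s] Kb0 by (simp add: mult_left_mono)
        show "norm s^2 \<le> R^2" using R[OF s] by (intro power_mono) auto
      qed auto
      finally show "norm (brfactor (fst p) s - 1) \<le> (2*Kb*R + R^2) * (1 / norm (fst p)^2)" .
    qed (rule Plim)
  qed
qed

end
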